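(* Let $y_1,y_2,\dots$ be i.i.d. $\mathcal{N}(\phi_0,1)$ with true value $\phi_0=0$, and let the prior on $\phi$ be the HTHS prior or the HTHS+ prior (defined in the context). Let $R_n(0)$ be the Cesàro-average Bayes predictive risk (defined in the context). Then for any $a>0$ there is a constant $C_a^0>0$ such that $$R_n(0)\le a\,\frac{\log n}{n}+\frac{1}{n}\left(1+\frac{1}{a\,C_a^0}\right).$$
   Context: The HTHS prior on $\phi\in\mathbb{R}$: $\phi\mid\gamma\sim\mathcal{N}(0,1/\gamma)$, with $\gamma$ having density $\frac{1}{\gamma\left((\log\gamma)^2+\pi^2\right)}$ on $(0,\infty)$. The HTHS+ prior: $\phi\mid\gamma\sim\mathcal{N}(0,1/\gamma)$ with $\gamma$ having density $\frac{2}{\gamma\left((\log\gamma)^2+4\pi^2\right)}$ on $(0,\infty)$. Let $f(y\mid\phi)$ denote the $\mathcal{N}(\phi,1)$ density and $L(f_1,f_2)=\int f_1\log(f_1/f_2)$ the Kullback–Leibler divergence. For $j\ge1$, let $\hat f_j(y)=\int f(y\mid\phi)\,\pi(\mathrm{d}\phi\mid y_1,\dots,y_{j-1})$ be the Bayes posterior predictive density after $j-1$ observations (with $\hat f_1$ the prior predictive). The Cesàro-average Bayes predictive risk is $R_n(\phi_0)=\frac{1}{n}\sum_{j=1}^n \mathbb{E}_{\phi_0}\big[L(f(\cdot\mid\phi_0),\hat f_j)\big]$. *)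

theory Defs
  imports "HOL-Probability.Probability"
begin

definition hths_gamma_dens :: "real \<Rightarrow> real" where
  "hths_gamma_dens g = 1 / (g * ((ln g)\<^sup>2 + pi\<^sup>2))"

definition hths_plus_gamma_dens :: "real \<Rightarrow> real" where
  "hths_plus_gamma_dens g = 2 / (g * ((ln g)\<^sup>2 + 4 * pi\<^sup>2))"

definition scale_mix_prior :: "(real \<Rightarrow> real) \<Rightarrow> real \<Rightarrow> real" where
  "scale_mix_prior dg phi =
     (\<integral>g\<in>{0<..}. dg g * normal_density 0 (1 / sqrt g) phi \<partial>lborel)"

definition hths_prior :: "real \<Rightarrow> real" where
  "hths_prior = scale_mix_prior hths_gamma_dens"

definition hths_plus_prior :: "real \<Rightarrow> real" where
  "hths_plus_prior = scale_mix_prior hths_plus_gamma_dens"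

text \<open>Bayes posterior predictive density after observing ys 0, ..., ys (m-1)
  (m = 0 gives the prior predictive); the model is y | phi ~ N(phi,1).\<close>
definition pred_dens :: "(real \<Rightarrow> real) \<Rightarrow> nat \<Rightarrow> (nat \<Rightarrow> real) \<Rightarrow> real \<Rightarrow> real" where
  "pred_dens pri m ys y =
     (\<integral>phi. pri phi * (\<Prod>i<m. normal_density phi 1 (ys i)) * normal_density phi 1 y \<partial>lborel)
     / (\<integral>phi. pri phi * (\<Prod>i<m. normal_density phi 1 (ys i)) \<partial>lborel)"

definition KL_div :: "(real \<Rightarrow> real) \<Rightarrow> (real \<Rightarrow> real) \<Rightarrow> real" where
  "KL_div f1 f2 = (\<integral>y. f1 y * ln (f1 y / f2 y) \<partial>lborel)"

definition cesaro_risk :: "(real \<Rightarrow> real) \<Rightarrow> real \<Rightarrow> nat \<Rightarrow> real" where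
  "cesaro_risk pri phi0 n =
     (1 / real n) * (\<Sum>j\<in>{1..n}.
        \<integral>ys. KL_div (normal_density phi0 1) (pred_dens pri (j - 1) ys)
          \<partial>(PiM {..<j - 1} (\<lambda>_. density lborel (normal_density phi0 1))))"

end

theory Submission
  imports Defs
begin


definition dgc :: "real \<Rightarrow> real \<Rightarrow> real" where
  "dgc c g = (c / pi) / (g * ((ln g)\<^sup>2 + c\<^sup>2))"

lemma hths_eq: "hths_gamma_dens = dgc pi"
  by (auto simp: fun_eq_iff hths_gamma_dens_def dgc_def)

lemma hths_plus_eq: "hths_plus_gamma_dens = dgc (2*pi)"
  by (auto simp: fun_eq_iff hths_plus_gamma_dens_def dgc_def power_mult_distrib)

lemma dgc_integrable:
  assumes c: "c > 0"
  shows "set_integrable lborel {0<..} (dgc c)"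
proof -
  let ?F = "\<lambda>g. arctan (ln g / c) / pi"
  have e: "einterval 0 \<infinity> = {0<..}" by (auto simp: einterval_def)
  have "set_integrable lborel (einterval 0 \<infinity>) (dgc c)"
  proof (rule interval_integral_FTC_nonneg(1)[where F="?F" and A="-1/2" and B="1/2"])
    show "(0::ereal) < \<infinity>" by simp
    fix x assume "0 < ereal x" "ereal x < \<infinity>"
    then have x: "x > 0" by simp
    show "(?F has_real_derivative dgc c x) (at x)"
      using x c
    proof -
      have p: "c\<^sup>2 + (ln x)\<^sup>2 > 0" using c by (simp add: add_pos_nonneg)
      show ?thesis
        using x c p
        apply (auto intro!: derivative_eq_intros simp: dgc_def)
        apply (simp add: field_simps power2_eq_square)
        apply (subgoal_tac "pi * (c * (c * (c * x))) + pi * (c * (x * (ln x * ln x))) = c * (pi * (c * (c * x)) + pi * (x * (ln x * ln x)))")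
         apply simp
        apply (simp add: algebra_simps)
        done
    qed
    show "isCont (dgc c) x" using x c unfolding dgc_def
      by (auto intro!: continuous_intros simp: add_pos_nonneg)
  next
    show "AE x in lborel. 0 < ereal x \<longrightarrow> ereal x < \<infinity> \<longrightarrow> 0 \<le> dgc c x"
      using c by (auto simp: dgc_def intro!: divide_nonneg_pos mult_pos_pos add_nonneg_pos)
    show "((?F \<circ> real_of_ereal) \<longlongrightarrow> -1/2) (at_right 0)"
      unfolding zero_ereal_def ereal_tendsto_simps
    proof -
      have "filterlim (\<lambda>g. (1/c) * ln g) at_bot (at_right (0::real))"
        by (rule filterlim_tendsto_pos_mult_at_bot[OF tendsto_const _ ln_at_0]) (use c in simp)
      then have "filterlim (\<lambda>g. ln g / c) at_bot (at_right (0::real))" by simp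
      from filterlim_compose[OF tendsto_arctan_at_bot this]
      have "((\<lambda>g. arctan (ln g / c)) \<longlongrightarrow> - (pi/2)) (at_right 0)" .
      from tendsto_divide[OF this tendsto_const[of pi]]
      show "((\<lambda>g. arctan (ln g / c) / pi) \<longlongrightarrow> -1/2) (at_right 0)" by simp
    qed
    show "((?F \<circ> real_of_ereal) \<longlongrightarrow> 1/2) (at_left \<infinity>)"
      unfolding ereal_tendsto_simps
    proof -
      have "filterlim (\<lambda>g. (1/c) * ln g) at_top (at_top :: real filter)"
        by (rule filterlim_tendsto_pos_mult_at_top[OF tendsto_const _ ln_at_top]) (use c in simp)
      then have "filterlim (\<lambda>g. ln g / c) at_top (at_top :: real filter)" by simp
      from filterlim_compose[OF tendsto_arctan_at_top this]
      have "((\<lambda>g. arctan (ln g / c)) \<longlongrightarrow> (pi/2)) at_top" .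
      from tendsto_divide[OF this tendsto_const[of pi]]
      show "((\<lambda>g. arctan (ln g / c) / pi) \<longlongrightarrow> 1/2) at_top" by simp
    qed
  qed
  then show ?thesis using e by simp
qed



lemma nd_scale:
  assumes g: "g > 0"
  shows "normal_density 0 (1 / sqrt g) phi = sqrt g / sqrt (2*pi) * exp (- g * phi\<^sup>2 / 2)"
  using g by (simp add: normal_density_def power_divide real_sqrt_divide real_sqrt_mult field_simps)

lemma pri_meas[measurable]: "scale_mix_prior (dgc c) \<in> borel_measurable borel"
  unfolding scale_mix_prior_def set_lebesgue_integral_def normal_density_def dgc_def
  by measurable

lemma pri_nonneg: "c > 0 \<Longrightarrow> 0 \<le> scale_mix_prior (dgc c) phi"
  unfolding scale_mix_prior_def set_lebesgue_integral_def
  by (intro integral_nonneg_AE AE_I2) (auto simp: dgc_def indicator_def intro!: mult_nonneg_nonneg divide_nonneg_pos add_nonneg_pos)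

lemma pri_even: "scale_mix_prior (dgc c) (- phi) = scale_mix_prior (dgc c) phi"
  unfolding scale_mix_prior_def by (simp add: normal_density_def)



lemma nd_bound:
  assumes g: "g > 0" and phi: "phi \<noteq> 0"
  shows "normal_density 0 (1 / sqrt g) phi \<le> 1 / \<bar>phi\<bar>"
proof -
  define x where "x = sqrt g * \<bar>phi\<bar>"
  have x0: "x \<ge> 0" unfolding x_def using g by simp
  have xx: "x\<^sup>2 = g * phi\<^sup>2" unfolding x_def using g by (simp add: power_mult_distrib)
  have "1 + x\<^sup>2/2 \<le> exp (x\<^sup>2/2)" by (rule exp_ge_add_one_self)
  moreover have "x \<le> 1 + x\<^sup>2/2"
  proof -
    have "0 \<le> (x - 1)\<^sup>2" by simp
    then show ?thesis by (simp add: power2_diff)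
  qed
  ultimately have "x \<le> exp (x\<^sup>2 / 2)" by (rule order_trans[rotated])
  then have "x \<le> exp (g * phi\<^sup>2 / 2)" using xx by simp
  then have "x * exp (- (g * phi\<^sup>2 / 2)) \<le> 1"
    by (simp add: exp_minus field_simps)
  then have A: "sqrt g * exp (- g * phi\<^sup>2 / 2) \<le> 1 / \<bar>phi\<bar>"
    using phi unfolding x_def by (simp add: field_simps)
  have s: "1 \<le> sqrt (2*pi)" using pi_gt3 by (simp add: real_le_rsqrt)
  have "sqrt g / sqrt (2*pi) * exp (- g * phi\<^sup>2 / 2) \<le> sqrt g * exp (- g * phi\<^sup>2 / 2)"
    using s g by (simp add: divide_le_eq mult_le_cancel_left2 mult_le_cancel_right2 field_simps)
  then show ?thesis using A nd_scale[OF g] by simp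
qed

lemma pri_inner_int:
  assumes c: "c > 0" and phi: "phi \<noteq> 0"
  shows "integrable lborel (\<lambda>g. indicator {0<..} g *\<^sub>R (dgc c g * normal_density 0 (1 / sqrt g) phi))"
proof (rule Bochner_Integration.integrable_bound)
  show "integrable lborel (\<lambda>g. (indicator {0<..} g *\<^sub>R dgc c g) * (1 / \<bar>phi\<bar>))"
    using dgc_integrable[OF c] unfolding set_integrable_def by (rule integrable_mult_left)
  show "(\<lambda>g. indicator {0<..} g *\<^sub>R (dgc c g * normal_density 0 (1 / sqrt g) phi)) \<in> borel_measurable lborel"
    unfolding normal_density_def dgc_def by measurable
  show "AE x in lborel. norm (indicator {0<..} x *\<^sub>R (dgc c x * normal_density 0 (1 / sqrt x) phi))
          \<le> norm (indicator {0<..} x *\<^sub>R dgc c x * (1 / \<bar>phi\<bar>))"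
  proof (rule AE_I2)
    fix x :: real
    show "norm (indicator {0<..} x *\<^sub>R (dgc c x * normal_density 0 (1 / sqrt x) phi))
          \<le> norm (indicator {0<..} x *\<^sub>R dgc c x * (1 / \<bar>phi\<bar>))"
    proof (cases "x > 0")
      case True
      have d: "dgc c x \<ge> 0" using True c by (auto simp: dgc_def intro!: divide_nonneg_pos mult_pos_pos add_nonneg_pos)
      have "dgc c x * normal_density 0 (1 / sqrt x) phi \<le> dgc c x * (1 / \<bar>phi\<bar>)"
        by (rule mult_left_mono[OF nd_bound[OF True phi] d])
      then show ?thesis using True d by (simp add: abs_mult)
    qed simp
  qed
qed



lemma dgc_nonneg: "c > 0 \<Longrightarrow> g > 0 \<Longrightarrow> dgc c g \<ge> 0"
  by (auto simp: dgc_def intro!: divide_nonneg_pos mult_pos_pos add_nonneg_pos)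

lemma pri_lower:
  assumes c: "c > 0" and G: "G \<ge> 1" and phi: "phi \<noteq> 0" "phi\<^sup>2 \<le> 1 / G"
  shows "scale_mix_prior (dgc c) phi \<ge>
           (c / pi) / (2 * ((ln (2*G))\<^sup>2 + c\<^sup>2)) * (sqrt G / sqrt (2*pi)) * exp (-1)"
proof -
  define m where "m = (c / pi) / (2*G * ((ln (2*G))\<^sup>2 + c\<^sup>2)) * (sqrt G / sqrt (2*pi)) * exp (-1)"
  have m0: "m \<ge> 0" unfolding m_def using c G by (auto intro!: divide_nonneg_pos mult_pos_pos add_nonneg_pos)
  have pt: "indicator {G..2*G} g * m \<le> indicator {0<..} g *\<^sub>R (dgc c g * normal_density 0 (1 / sqrt g) phi)" for g
  proof (cases "g \<in> {G..2*G}")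
    case True
    then have g: "G \<le> g" "g \<le> 2*G" by auto
    have g0: "g > 0" using g G by simp
    have l0: "0 \<le> ln g" using g G by simp
    have l1: "ln g \<le> ln (2*G)" using g G by simp
    have "(ln g)\<^sup>2 \<le> (ln (2*G))\<^sup>2" by (rule power_mono[OF l1 l0])
    then have den: "g * ((ln g)\<^sup>2 + c\<^sup>2) \<le> 2*G * ((ln (2*G))\<^sup>2 + c\<^sup>2)"
      using g g0 by (intro mult_mono add_mono) auto
    have dpos: "0 < g * ((ln g)\<^sup>2 + c\<^sup>2)" using g0 c by (simp add: add_nonneg_pos)
    have D: "(c / pi) / (2*G * ((ln (2*G))\<^sup>2 + c\<^sup>2)) \<le> dgc c g"
    proof -
      have "0 < 2*G * ((ln (2*G))\<^sup>2 + c\<^sup>2)" using G c by (simp add: add_nonneg_pos)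
      then have "0 < (2*G * ((ln (2*G))\<^sup>2 + c\<^sup>2)) * (g * ((ln g)\<^sup>2 + c\<^sup>2))"
        using dpos by simp
      then show ?thesis unfolding dgc_def using c by (intro divide_left_mono den) auto
    qed
    have e: "exp (-1) \<le> exp (- g * phi\<^sup>2 / 2)"
    proof -
      have "g * phi\<^sup>2 \<le> 2*G * (1/G)" using g phi(2) G by (intro mult_mono) auto
      then have "g * phi\<^sup>2 \<le> 2" using G by simp
      then show ?thesis by simp
    qed
    have s: "sqrt G \<le> sqrt g" using g by simp
    have N: "(sqrt G / sqrt (2*pi)) * exp (-1) \<le> normal_density 0 (1 / sqrt g) phi"
      unfolding nd_scale[OF g0] using s e g0 by (intro mult_mono divide_right_mono) auto
    have "m \<le> dgc c g * normal_density 0 (1 / sqrt g) phi"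
      unfolding m_def mult.assoc using D N c G dgc_nonneg[OF c g0]
      by (intro mult_mono) (auto intro!: divide_nonneg_pos mult_pos_pos add_nonneg_pos)
    then show ?thesis using True g0 by simp
  next
    case False
    then show ?thesis
      by (cases "g > 0") (auto simp: indicator_def intro!: mult_nonneg_nonneg dgc_nonneg[OF c])
  qed
  have "(\<integral>g. indicator {G..2*G} g * m \<partial>lborel) \<le>
        (\<integral>g. indicator {0<..} g *\<^sub>R (dgc c g * normal_density 0 (1 / sqrt g) phi) \<partial>lborel)"
    by (intro integral_mono pt pri_inner_int[OF c phi(1)] integrable_mult_left integrable_real_indicator) (use G in \<open>auto simp: emeasure_lborel_Icc\<close>)
  also have "\<dots> = scale_mix_prior (dgc c) phi"
    unfolding scale_mix_prior_def set_lebesgue_integral_def ..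
  finally have "G * m \<le> scale_mix_prior (dgc c) phi" using G by simp
  moreover have "G * m = (c / pi) / (2 * ((ln (2*G))\<^sup>2 + c\<^sup>2)) * (sqrt G / sqrt (2*pi)) * exp (-1)"
  proof -
    define Y where "Y = (ln (2*G))\<^sup>2 + c\<^sup>2"
    have Y: "Y > 0" unfolding Y_def using c by (simp add: add_nonneg_pos)
    have "G * ((c / pi) / (2*G * Y) * (sqrt G / sqrt (2*pi)) * exp (-1)) = (c / pi) / (2 * Y) * (sqrt G / sqrt (2*pi)) * exp (-1)"
      using G Y by (simp add: field_simps)
    then show ?thesis unfolding m_def Y_def .
  qed
  ultimately show ?thesis by simp
qed

lemma pri_integrable:
  assumes c: "c > 0"
  shows "integrable lborel (scale_mix_prior (dgc c))"
proof (rule integrableI_nonneg)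
  show "scale_mix_prior (dgc c) \<in> borel_measurable lborel" by measurable
  show "AE x in lborel. 0 \<le> scale_mix_prior (dgc c) x" using pri_nonneg[OF c] by simp
  define h where "h = (\<lambda>(phi::real, g::real). indicator {0<..} g *\<^sub>R (dgc c g * normal_density 0 (1 / sqrt g) phi))"
  have hm[measurable]: "h \<in> borel_measurable (lborel \<Otimes>\<^sub>M lborel)"
    unfolding h_def normal_density_def dgc_def by measurable
  have h0: "h x \<ge> 0" for x
    unfolding h_def by (cases x; cases "snd x > 0") (auto intro!: mult_nonneg_nonneg dgc_nonneg[OF c])
  have "(\<integral>\<^sup>+ phi. ennreal (scale_mix_prior (dgc c) phi) \<partial>lborel) \<le>
        (\<integral>\<^sup>+ phi. (\<integral>\<^sup>+ g. ennreal (h (phi, g)) \<partial>lborel) \<partial>lborel)"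
  proof (rule nn_integral_mono)
    fix phi :: real
    have "scale_mix_prior (dgc c) phi = enn2real (\<integral>\<^sup>+ g. ennreal (h (phi, g)) \<partial>lborel)"
      unfolding scale_mix_prior_def set_lebesgue_integral_def h_def prod.case
      by (rule integral_eq_nn_integral) (use h0[unfolded h_def] in \<open>auto simp: normal_density_def dgc_def\<close>)
    then show "ennreal (scale_mix_prior (dgc c) phi) \<le> (\<integral>\<^sup>+ g. ennreal (h (phi, g)) \<partial>lborel)"
      by (simp add: ennreal_enn2real_if)
  qed
  also have "\<dots> = (\<integral>\<^sup>+ g. (\<integral>\<^sup>+ phi. ennreal (h (phi, g)) \<partial>lborel) \<partial>lborel)"
    by (rule lborel_pair.Fubini') measurable
  also have "\<dots> = (\<integral>\<^sup>+ g. ennreal (indicator {0<..} g * dgc c g) \<partial>lborel)"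
  proof (rule nn_integral_cong)
    fix g :: real
    show "(\<integral>\<^sup>+ phi. ennreal (h (phi, g)) \<partial>lborel) = ennreal (indicator {0<..} g * dgc c g)"
    proof (cases "g > 0")
      case True
      have "(\<integral>\<^sup>+ phi. ennreal (h (phi, g)) \<partial>lborel) =
            (\<integral>\<^sup>+ phi. ennreal (dgc c g) * ennreal (normal_density 0 (1 / sqrt g) phi) \<partial>lborel)"
        using True dgc_nonneg[OF c True] by (intro nn_integral_cong) (simp add: h_def ennreal_mult)
      also have "\<dots> = ennreal (dgc c g) * (\<integral>\<^sup>+ phi. ennreal (normal_density 0 (1 / sqrt g) phi) \<partial>lborel)"
        by (rule nn_integral_cmult) measurable
      also have "(\<integral>\<^sup>+ phi. ennreal (normal_density 0 (1 / sqrt g) phi) \<partial>lborel) = 1"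
        using True by (subst nn_integral_eq_integral[OF integrable_normal_density]) auto
      finally show ?thesis using True by simp
    qed (simp add: h_def)
  qed
  also have "\<dots> < \<infinity>"
  proof -
    have i: "integrable lborel (\<lambda>g. indicator {0<..} g * dgc c g)"
      using dgc_integrable[OF c] unfolding set_integrable_def by simp
    have "(\<integral>\<^sup>+ g. ennreal (indicator {0<..} g * dgc c g) \<partial>lborel) = ennreal (\<integral> g. indicator {0<..} g * dgc c g \<partial>lborel)"
      by (rule nn_integral_eq_integral[OF i]) (auto simp: indicator_def intro!: dgc_nonneg[OF c])
    then show ?thesis by simp
  qed
  finally show "(\<integral>\<^sup>+ phi. ennreal (scale_mix_prior (dgc c) phi) \<partial>lborel) < \<infinity>" .
qed



lemma nd1: "normal_density mu 1 x \<le> 1"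
proof -
  have s: "1 \<le> sqrt (2*pi)" using pi_gt3 by (simp add: real_le_rsqrt)
  have e: "exp (- (x - mu)\<^sup>2 / 2) \<le> 1" by simp
  have "exp (- (x - mu)\<^sup>2 / 2) / sqrt (2*pi) \<le> 1 / 1"
    by (rule frac_le) (use e s in auto)
  then show ?thesis unfolding normal_density_def by simp
qed

lemma prod_nd_le1: "0 \<le> (\<Prod>i\<in>I. normal_density phi 1 (z i)) \<and> (\<Prod>i\<in>I. normal_density phi 1 (z i)) \<le> 1"
  by (intro conjI prod_nonneg prod_le_1) (auto simp: nd1)

lemma nd_shift: "normal_density phi 1 x = normal_density 0 1 x * exp (phi * x - phi\<^sup>2 / 2)"
proof -
  have "- (x - phi)\<^sup>2 / 2 = - x\<^sup>2 / 2 + (phi * x - phi\<^sup>2 / 2)" by (simp add: power2_diff field_simps)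
  then have "exp (- (x - phi)\<^sup>2 / 2) = exp (- x\<^sup>2 / 2) * exp (phi * x - phi\<^sup>2 / 2)"
    by (simp add: exp_add[symmetric])
  then show ?thesis unfolding normal_density_def by simp
qed

lemma prod_nd_shift:
  "(\<Prod>i<k. normal_density phi 1 (z i)) =
     (\<Prod>i<k. normal_density 0 1 (z i)) * exp (phi * (\<Sum>i<k. z i) - real k * phi\<^sup>2 / 2)"
proof -
  have "(\<Prod>i<k. normal_density phi 1 (z i)) = (\<Prod>i<k. normal_density 0 1 (z i) * exp (phi * z i - phi\<^sup>2 / 2))"
    by (rule prod.cong[OF refl], rule nd_shift)
  also have "\<dots> = (\<Prod>i<k. normal_density 0 1 (z i)) * (\<Prod>i<k. exp (phi * z i - phi\<^sup>2 / 2))"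
    by (rule prod.distrib)
  also have "(\<Prod>i<k. exp (phi * z i - phi\<^sup>2 / 2)) = exp (\<Sum>i<k. phi * z i - phi\<^sup>2 / 2)"
    by (rule exp_sum[symmetric]) simp
  also have "(\<Sum>i<k. phi * z i - phi\<^sup>2 / 2) = phi * (\<Sum>i<k. z i) - real k * phi\<^sup>2 / 2"
    by (simp add: sum_subtractf sum_distrib_left)
  finally show ?thesis .
qed



definition Lam :: "(real \<Rightarrow> real) \<Rightarrow> nat \<Rightarrow> (nat \<Rightarrow> real) \<Rightarrow> real" where
  "Lam pri k z = (\<integral>phi. pri phi * (\<Prod>i<k. normal_density phi 1 (z i)) \<partial>lborel)"

locale prior =
  fixes pri :: "real \<Rightarrow> real" and b :: "real \<Rightarrow> real"
  assumes pri_meas[measurable]: "pri \<in> borel_measurable borel"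
  and pri_nn: "\<And>phi. 0 \<le> pri phi"
  and pri_ev: "\<And>phi. pri (- phi) = pri phi"
  and pri_int: "integrable lborel pri"
  and pri_low: "\<And>G phi. 1 \<le> G \<Longrightarrow> phi \<noteq> 0 \<Longrightarrow> phi\<^sup>2 \<le> 1 / G \<Longrightarrow> b G \<le> pri phi"
  and b_pos: "\<And>G. 1 \<le> G \<Longrightarrow> 0 < b G"
begin

definition "Z = (\<integral>phi. pri phi \<partial>lborel)"

definition "beta k = b (real k + 1) * (1 / sqrt (real k + 1)) * exp (- 1 / 2)"

lemma beta_pos: "beta k > 0"
  unfolding beta_def using b_pos[of "real k + 1"] by simp

lemma Lam_integrand_int: "integrable lborel (\<lambda>phi. pri phi * (\<Prod>i<k. normal_density phi 1 (z i)))"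
proof (rule Bochner_Integration.integrable_bound[OF pri_int])
  show "(\<lambda>phi. pri phi * (\<Prod>i<k. normal_density phi 1 (z i))) \<in> borel_measurable lborel"
    unfolding normal_density_def by measurable
  show "AE x in lborel. norm (pri x * (\<Prod>i<k. normal_density x 1 (z i))) \<le> norm (pri x)"
  proof (intro AE_I2)
    fix x
    show "norm (pri x * (\<Prod>i<k. normal_density x 1 (z i))) \<le> norm (pri x)"
      using prod_nd_le1[of x z "{..<k}"] pri_nn[of x] by (simp add: abs_mult mult_left_le)
  qed
qed

lemma Lam_upper: "Lam pri k z \<le> Z"
  unfolding Lam_def Z_def
  by (intro integral_mono Lam_integrand_int pri_int mult_left_le) (use prod_nd_le1 pri_nn in auto)

lemma Lam_lower: "beta k * (\<Prod>i<k. normal_density 0 1 (z i)) \<le> Lam pri k z"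
proof -
  define d where "d = 1 / sqrt (real k + 1)"
  define A where "A = {d/2..d}"
  define p where "p = b (real k + 1)"
  define P where "P = (\<lambda>phi. \<Prod>i<k. normal_density phi 1 (z i))"
  define F where "F = (\<Prod>i<k. normal_density 0 1 (z i))"
  define S where "S = (\<Sum>i<k. z i)"
  have d0: "d > 0" and d1: "d \<le> 1" unfolding d_def by auto
  have dd: "d\<^sup>2 = 1 / (real k + 1)" unfolding d_def by (simp add: power_divide)
  have p0: "p > 0" unfolding p_def by (rule b_pos) simp
  have F0: "F \<ge> 0" unfolding F_def by (simp add: prod_nonneg)
  have P01: "0 \<le> P phi" "P phi \<le> 1" for phi unfolding P_def using prod_nd_le1 by auto
  have PS: "P phi = F * exp (phi * S - real k * phi\<^sup>2 / 2)" for phi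
    unfolding P_def F_def S_def by (rule prod_nd_shift)
  have Pm[measurable]: "P \<in> borel_measurable borel" unfolding P_def normal_density_def by measurable
  have Am[measurable]: "A \<in> sets borel" unfolding A_def by simp
  have lowA: "p \<le> pri phi" if "phi \<in> A \<or> - phi \<in> A" for phi
  proof -
    have ab: "\<bar>phi\<bar> \<in> {d/2..d}" using that unfolding A_def by auto
    then have n0: "phi \<noteq> 0" using d0 by auto
    have "\<bar>phi\<bar>\<^sup>2 \<le> d\<^sup>2" using ab d0 by (intro power_mono) auto
    then have "phi\<^sup>2 \<le> 1 / (real k + 1)" using dd by simp
    then show ?thesis unfolding p_def by (intro pri_low n0) simp_all
  qed
  have emA: "emeasure lborel A < \<infinity>" unfolding A_def using d0 by (simp add: emeasure_lborel_Icc)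
  have disj: "\<not> (phi \<in> A \<and> - phi \<in> A)" for phi unfolding A_def using d0 by auto
  have pt: "p * (indicator A phi * P phi + indicator A (- phi) * P phi) \<le> pri phi * P phi" for phi
  proof (cases "phi \<in> A \<or> - phi \<in> A")
    case True
    then have "indicator A phi + indicator A (- phi) = (1::real)"
      using disj[of phi] by (auto simp: indicator_def)
    then have "p * (indicator A phi * P phi + indicator A (- phi) * P phi) = p * P phi"
      by (simp add: distrib_right[symmetric])
    also have "\<dots> \<le> pri phi * P phi" using lowA[OF True] P01(1)[of phi] by (rule mult_right_mono)
    finally show ?thesis .
  next
    case False
    then show ?thesis using pri_nn[of phi] P01[of phi] by simp
  qed
  have ibound: "integrable lborel (\<lambda>phi. f phi * h phi)" if fm: "f \<in> borel_measurable borel"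
    and hm: "h \<in> borel_measurable borel"
    and fb: "\<And>phi. \<bar>f phi\<bar> \<le> indicator {-1..1} phi" and hb: "\<And>phi. \<bar>h phi\<bar> \<le> 1" for f h :: "real \<Rightarrow> real"
  proof (rule Bochner_Integration.integrable_bound[where f="indicator {-1..1} :: real \<Rightarrow> real"])
    show "integrable lborel (indicator {-1..1} :: real \<Rightarrow> real)"
      by (intro integrable_real_indicator) (auto simp: emeasure_lborel_Icc)
    show "(\<lambda>phi. f phi * h phi) \<in> borel_measurable lborel" using fm hm by simp
    show "AE x in lborel. norm (f x * h x) \<le> norm (indicator {-1..1} x :: real)"
    proof (intro AE_I2)
      fix x
      have "\<bar>f x\<bar> * \<bar>h x\<bar> \<le> indicator {-1..1} x * 1"
        using fb[of x] hb[of x] by (intro mult_mono) auto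
      then show "norm (f x * h x) \<le> norm (indicator {-1..1} x :: real)" by (simp add: abs_mult)
    qed
  qed
  have indb: "\<bar>indicator A x\<bar> \<le> (indicator {-1..1} x :: real)" for x
    using d0 d1 by (auto simp: A_def indicator_def)
  have indb': "\<bar>indicator A (- x)\<bar> \<le> (indicator {-1..1} x :: real)" for x
    using d0 d1 by (auto simp: A_def indicator_def)
  have Pb: "\<bar>P x\<bar> \<le> 1" for x using P01[of x] by simp
  have Pb': "\<bar>P (- x)\<bar> \<le> 1" for x using P01[of "- x"] by simp
  have i1: "integrable lborel (\<lambda>phi. indicator A phi * P phi)"
    by (rule ibound[OF _ _ indb Pb]) simp_all
  have i2: "integrable lborel (\<lambda>phi. indicator A (- phi) * P phi)"
    by (rule ibound[OF _ _ indb' Pb]) simp_all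
  have i3: "integrable lborel (\<lambda>phi. indicator A phi * P (- phi))"
    by (rule ibound[OF _ _ indb Pb']) simp_all
  have refl: "(\<integral>phi. indicator A (- phi) * P phi \<partial>lborel) = (\<integral>phi. indicator A phi * P (- phi) \<partial>lborel)"
    using lborel_integral_real_affine[of "-1" "\<lambda>phi. indicator A (- phi) * P phi" 0] by simp
  have lowpt: "2 * F * exp (- 1 / 2) * indicator A phi \<le> indicator A phi * (P phi + P (- phi))" for phi
  proof (cases "phi \<in> A")
    case True
    have kp: "real k * phi\<^sup>2 \<le> 1"
    proof -
      have "\<bar>phi\<bar>\<^sup>2 \<le> d\<^sup>2" using True d0 unfolding A_def by (intro power_mono) auto
      then have "real k * phi\<^sup>2 \<le> real k * (1 / (real k + 1))" using dd by (intro mult_left_mono) auto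
      also have "\<dots> \<le> 1" by (simp add: field_simps)
      finally show ?thesis .
    qed
    then have e: "exp (- 1 / 2) \<le> exp (- (real k * phi\<^sup>2 / 2))" by simp
    have c2: "2 \<le> exp (phi * S) + exp (- (phi * S))"
    proof -
      have "1 + phi * S \<le> exp (phi * S)" "1 + - (phi * S) \<le> exp (- (phi * S))"
        by (rule exp_ge_add_one_self)+
      then show ?thesis by linarith
    qed
    have "P phi + P (- phi) = F * exp (- (real k * phi\<^sup>2 / 2)) * (exp (phi * S) + exp (- (phi * S)))"
    proof -
      have e1: "exp (phi * S - real k * phi\<^sup>2 / 2) = exp (- (real k * phi\<^sup>2 / 2)) * exp (phi * S)"
        by (subst exp_add[symmetric]) (simp add: algebra_simps)
      have e2: "exp ((- phi) * S - real k * (- phi)\<^sup>2 / 2) = exp (- (real k * phi\<^sup>2 / 2)) * exp (- (phi * S))"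
        by (subst exp_add[symmetric]) (simp add: algebra_simps)
      show ?thesis unfolding PS e1 e2 by (simp add: algebra_simps)
    qed
    moreover have "2 * F * exp (- 1 / 2) \<le> F * exp (- (real k * phi\<^sup>2 / 2)) * (exp (phi * S) + exp (- (phi * S)))"
    proof -
      have "F * exp (- 1 / 2) \<le> F * exp (- (real k * phi\<^sup>2 / 2))" using e F0 by (rule mult_left_mono)
      then have "F * exp (- 1 / 2) * 2 \<le> F * exp (- (real k * phi\<^sup>2 / 2)) * (exp (phi * S) + exp (- (phi * S)))"
        using c2 F0 kp by (intro mult_mono) auto
      then show ?thesis by (simp add: ac_simps)
    qed
    ultimately show ?thesis using True by simp
  next
    case False
    then show ?thesis by simp
  qed
  have "beta k * F = p * (2 * F * exp (- 1 / 2) * (d / 2))"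
    unfolding beta_def p_def d_def by simp
  also have "2 * F * exp (- 1 / 2) * (d / 2) = (\<integral>phi. 2 * F * exp (- 1 / 2) * indicator A phi \<partial>lborel)"
    unfolding A_def using d0 by simp
  also have "\<dots> \<le> (\<integral>phi. indicator A phi * (P phi + P (- phi)) \<partial>lborel)"
    by (intro integral_mono lowpt integrable_mult_right integrable_real_indicator)
       (use emA in \<open>auto simp: distrib_left intro!: Bochner_Integration.integrable_add i1 i3\<close>)
  also have "\<dots> = (\<integral>phi. indicator A phi * P phi \<partial>lborel) + (\<integral>phi. indicator A (- phi) * P phi \<partial>lborel)"
    unfolding refl distrib_left by (rule Bochner_Integration.integral_add[OF i1 i3])
  also have "\<dots> = (\<integral>phi. indicator A phi * P phi + indicator A (- phi) * P phi \<partial>lborel)"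
    by (rule Bochner_Integration.integral_add[OF i1 i2, symmetric])
  finally have "beta k * F \<le> p * (\<integral>phi. indicator A phi * P phi + indicator A (- phi) * P phi \<partial>lborel)"
    using p0 by (simp add: mult_left_mono)
  also have "\<dots> = (\<integral>phi. p * (indicator A phi * P phi + indicator A (- phi) * P phi) \<partial>lborel)"
    by simp
  also have "\<dots> \<le> (\<integral>phi. pri phi * P phi \<partial>lborel)"
    by (intro integral_mono pt integrable_mult_right Bochner_Integration.integrable_add i1 i2)
       (unfold P_def, rule Lam_integrand_int)
  finally show ?thesis unfolding Lam_def P_def F_def .
qed

end



definition "Q = density lborel (normal_density 0 1)"

lemma Q_prob: "prob_space Q" unfolding Q_def by (rule prob_space_normal_density) simp

interpretation Qp: prob_space Q by (rule Q_prob)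

lemma sets_Q[measurable_cong]: "sets Q = sets borel" unfolding Q_def by simp
lemma space_Q[simp]: "space Q = UNIV" unfolding Q_def by simp

lemma lnf0: "ln (normal_density 0 1 x) = - x\<^sup>2 / 2 - ln (sqrt (2*pi))"
  by (simp add: normal_density_def ln_div)

lemma lnsq_pos: "ln (sqrt (2*pi)) > 0"
proof -
  have "1 < sqrt (2*pi)" using pi_gt3 by (simp add: real_less_rsqrt)
  then show ?thesis by simp
qed

lemma integrable_Q_iff: "g \<in> borel_measurable borel \<Longrightarrow>
   integrable Q g \<longleftrightarrow> integrable lborel (\<lambda>x. normal_density 0 1 x * g x)"
  unfolding Q_def by (subst integrable_density) auto

lemma integral_Q: "g \<in> borel_measurable borel \<Longrightarrow>
   integral\<^sup>L Q g = (\<integral>x. normal_density 0 1 x * g x \<partial>lborel)"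
  unfolding Q_def by (subst integral_density) auto

lemma ell_int: "integrable Q (\<lambda>x. ln (normal_density 0 1 x))" "integrable Q (\<lambda>x. \<bar>ln (normal_density 0 1 x)\<bar>)"
proof -
  have m2: "integrable lborel (\<lambda>x. normal_density 0 1 x * x ^ 2)"
    using integrable_normal_moment[of 1 0 2] by simp
  have n: "integrable lborel (\<lambda>x. normal_density 0 1 x)"
    using integrable_normal_density[of 1 0] by simp
  have i: "integrable lborel (\<lambda>x. (normal_density 0 1 x * x ^ 2) * (1/2) + normal_density 0 1 x * ln (sqrt (2*pi)))"
    using m2 n by (intro Bochner_Integration.integrable_add integrable_mult_left integrable_mult_left) auto
  have e1: "\<bar>ln (normal_density 0 1 x)\<bar> = x\<^sup>2 / 2 + ln (sqrt (2*pi))" for x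
  proof -
    have "0 \<le> x\<^sup>2 / 2" by simp
    then have "- x\<^sup>2 / 2 - ln (sqrt (2*pi)) < 0" using lnsq_pos by linarith
    then show ?thesis unfolding lnf0 by simp
  qed
  have "integrable lborel (\<lambda>x. normal_density 0 1 x * \<bar>ln (normal_density 0 1 x)\<bar>)"
    unfolding e1 using i by (simp add: algebra_simps)
  then show "integrable Q (\<lambda>x. \<bar>ln (normal_density 0 1 x)\<bar>)"
    by (subst integrable_Q_iff) (auto simp: normal_density_def)
  have gen: "a * (- y / 2 - c) = - ((a * y) * (1/2) + a * c)" for a y c :: real by (simp add: algebra_simps)
  have "integrable lborel (\<lambda>x. normal_density 0 1 x * ln (normal_density 0 1 x))"
    unfolding lnf0 gen using i by (rule integrable_minus)
  then show "integrable Q (\<lambda>x. ln (normal_density 0 1 x))"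
    by (subst integrable_Q_iff) (auto simp: normal_density_def)
qed

interpretation PQ: product_sigma_finite "\<lambda>_::nat. Q"
  by (simp add: product_sigma_finite_def prob_space_imp_sigma_finite Q_prob)

lemma comp_int:
  fixes h :: "real \<Rightarrow> real" and I :: "nat set" and i :: nat
  assumes I: "finite I" "i \<in> I" and h: "integrable Q h"
  shows "integrable (PiM I (\<lambda>_. Q)) (\<lambda>z. h (z i))"
    "(\<integral>z. h (z i) \<partial>PiM I (\<lambda>_. Q)) = integral\<^sup>L Q h"
proof -
  define f where "f = (\<lambda>j::nat. if j = i then h else (\<lambda>_. 1::real))"
  have fi: "\<And>j. j \<in> I \<Longrightarrow> integrable Q (f j)"
    unfolding f_def using h by (auto intro: Qp.integrable_const)
  have eq: "(\<Prod>j\<in>I. f j (z j)) = h (z i)" for z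
  proof -
    have "(\<Prod>j\<in>I. f j (z j)) = (\<Prod>j\<in>I. if j = i then h (z j) else 1)"
      unfolding f_def by (rule prod.cong) auto
    then show ?thesis using I by (simp add: prod.delta)
  qed
  show "integrable (PiM I (\<lambda>_. Q)) (\<lambda>z. h (z i))"
    using PQ.product_integrable_prod[where f=f, OF I(1) fi] unfolding eq .
  have "(\<Prod>j\<in>I. integral\<^sup>L Q (f j)) = integral\<^sup>L Q h"
  proof -
    have "(\<Prod>j\<in>I. integral\<^sup>L Q (f j)) = (\<Prod>j\<in>I. if j = i then integral\<^sup>L Q h else 1)"
      unfolding f_def by (rule prod.cong) (auto simp: Qp.prob_space[simplified])
    then show ?thesis using I by (simp add: prod.delta)
  qed
  then show "(\<integral>z. h (z i) \<partial>PiM I (\<lambda>_. Q)) = integral\<^sup>L Q h"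
    using PQ.product_integral_prod[where f=f, OF I(1) fi] unfolding eq by simp
qed



definition "Hq = integral\<^sup>L Q (\<lambda>y. ln (normal_density 0 1 y))"

lemma PP_prob: "prob_space (PiM I (\<lambda>_::nat. Q))"
  by (rule prob_space_PiM) (rule Q_prob)

lemma PP_const: "integrable (PiM I (\<lambda>_::nat. Q)) (\<lambda>_. c::real)"
proof -
  interpret P: prob_space "PiM I (\<lambda>_::nat. Q)" by (rule PP_prob)
  show ?thesis by simp
qed

lemma PP_const_int: "(\<integral>_. c \<partial>PiM I (\<lambda>_::nat. Q)) = (c::real)"
  using prob_space.prob_space[OF PP_prob, of I] by simp

lemma Q_const_int: "(\<integral>_. c \<partial>Q) = (c::real)"
  using Qp.prob_space by simp

lemma sum_ell_int: "integrable (PiM {..<k} (\<lambda>_::nat. Q)) (\<lambda>z. \<Sum>i<k. \<bar>ln (normal_density 0 1 (z i))\<bar>)"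
  by (intro Bochner_Integration.integrable_sum comp_int(1) ell_int) auto

lemma sum_lnf0_int: "integrable (PiM {..<k} (\<lambda>_::nat. Q)) (\<lambda>z. \<Sum>i<k. ln (normal_density 0 1 (z i)))"
  "(\<integral>z. (\<Sum>i<k. ln (normal_density 0 1 (z i))) \<partial>PiM {..<k} (\<lambda>_::nat. Q)) = real k * Hq"
proof -
  show "integrable (PiM {..<k} (\<lambda>_::nat. Q)) (\<lambda>z. \<Sum>i<k. ln (normal_density 0 1 (z i)))"
    by (intro Bochner_Integration.integrable_sum comp_int(1) ell_int) auto
  have "(\<integral>z. (\<Sum>i<k. ln (normal_density 0 1 (z i))) \<partial>PiM {..<k} (\<lambda>_::nat. Q))
        = (\<Sum>i<k. (\<integral>z. ln (normal_density 0 1 (z i)) \<partial>PiM {..<k} (\<lambda>_::nat. Q)))"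
    by (intro Bochner_Integration.integral_sum comp_int(1) ell_int) auto
  also have "\<dots> = (\<Sum>i<k. Hq)"
    unfolding Hq_def by (intro sum.cong refl comp_int(2) ell_int) auto
  finally show "(\<integral>z. (\<Sum>i<k. ln (normal_density 0 1 (z i))) \<partial>PiM {..<k} (\<lambda>_::nat. Q)) = real k * Hq"
    by simp
qed

lemma Lam_Suc_upd: "Lam pri (Suc k) (z(k:=y)) =
   (\<integral>phi. pri phi * (\<Prod>i<k. normal_density phi 1 (z i)) * normal_density phi 1 y \<partial>lborel)"
proof -
  have "(\<Prod>i<Suc k. normal_density phi 1 ((z(k:=y)) i)) = (\<Prod>i<k. normal_density phi 1 (z i)) * normal_density phi 1 y" for phi
  proof -
    have "(\<Prod>i<k. normal_density phi 1 ((z(k:=y)) i)) = (\<Prod>i<k. normal_density phi 1 (z i))"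
      by (rule prod.cong) auto
    then show ?thesis by (simp add: prod.lessThan_Suc)
  qed
  then show ?thesis unfolding Lam_def by (simp add: mult.assoc)
qed

lemma pred_eq: "pred_dens pri k z y = Lam pri (Suc k) (z(k:=y)) / Lam pri k z"
  unfolding pred_dens_def Lam_Suc_upd by (simp add: Lam_def)

context prior
begin

lemma Lam_pos: "Lam pri k z > 0"
proof -
  have "0 < beta k * (\<Prod>i<k. normal_density 0 1 (z i))"
    using beta_pos by (intro mult_pos_pos prod_pos) (auto intro: normal_density_pos)
  from order_less_le_trans[OF this Lam_lower[of k z]] show ?thesis .
qed

lemma Lam0: "Lam pri 0 z = Z" unfolding Lam_def Z_def by simp

lemma Z_pos: "Z > 0" using Lam_pos[of 0] Lam0 by simp

lemma ln_Lam_lower: "ln (beta k) + (\<Sum>i<k. ln (normal_density 0 1 (z i))) \<le> ln (Lam pri k z)"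
proof -
  have F: "0 < (\<Prod>i<k. normal_density 0 1 (z i))"
    by (intro prod_pos) (auto intro: normal_density_pos)
  have "ln (beta k * (\<Prod>i<k. normal_density 0 1 (z i))) \<le> ln (Lam pri k z)"
    using Lam_lower[of k z] beta_pos[of k] F Lam_pos[of k z] by (subst ln_le_cancel_iff) auto
  moreover have "ln (beta k * (\<Prod>i<k. normal_density 0 1 (z i))) = ln (beta k) + (\<Sum>i<k. ln (normal_density 0 1 (z i)))"
    using beta_pos[of k] F by (simp add: ln_mult ln_prod normal_density_pos[THEN less_imp_neq, THEN not_sym])
  ultimately show ?thesis by simp
qed

lemma ln_Lam_upper: "ln (Lam pri k z) \<le> ln Z"
  using Lam_upper[of k z] Lam_pos[of k z] by simp

lemma ln_Lam_abs: "\<bar>ln (Lam pri k z)\<bar> \<le> (\<bar>ln (beta k)\<bar> + \<bar>ln Z\<bar>) + (\<Sum>i<k. \<bar>ln (normal_density 0 1 (z i))\<bar>)"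
proof -
  have s1: "- (\<Sum>i<k. ln (normal_density 0 1 (z i))) \<le> (\<Sum>i<k. \<bar>ln (normal_density 0 1 (z i))\<bar>)"
    using sum_abs[of "\<lambda>i. ln (normal_density 0 1 (z i))" "{..<k}"] by (smt (verit) sum_nonneg abs_ge_zero abs_minus_cancel sum_negf)
  have s2: "0 \<le> (\<Sum>i<k. \<bar>ln (normal_density 0 1 (z i))\<bar>)" by (simp add: sum_nonneg)
  show ?thesis using ln_Lam_lower[of k z] ln_Lam_upper[of k z] s1 s2 by linarith
qed

lemma Lam_meas[measurable]: "Lam pri k \<in> borel_measurable (PiM {..<k} (\<lambda>_::nat. Q))"
  unfolding Lam_def normal_density_def by measurable

lemma lnLam_int: "integrable (PiM {..<k} (\<lambda>_::nat. Q)) (\<lambda>z. ln (Lam pri k z))"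
proof (rule Bochner_Integration.integrable_bound)
  show "integrable (PiM {..<k} (\<lambda>_::nat. Q)) (\<lambda>z. (\<bar>ln (beta k)\<bar> + \<bar>ln Z\<bar>) + (\<Sum>i<k. \<bar>ln (normal_density 0 1 (z i))\<bar>))"
    by (intro Bochner_Integration.integrable_add PP_const sum_ell_int)
  show "(\<lambda>z. ln (Lam pri k z)) \<in> borel_measurable (PiM {..<k} (\<lambda>_::nat. Q))" by measurable
  show "AE z in PiM {..<k} (\<lambda>_. Q). norm (ln (Lam pri k z)) \<le> norm ((\<bar>ln (beta k)\<bar> + \<bar>ln Z\<bar>) + (\<Sum>i<k. \<bar>ln (normal_density 0 1 (z i))\<bar>))"
    by (intro AE_I2) (use ln_Lam_abs[of k] in \<open>auto intro: order_trans[OF _ abs_ge_self]\<close>)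
qed

end



lemma Q_meas1[simp]: "measure Q UNIV = 1" using Qp.prob_space by simp

lemma PP_meas1[simp]: "measure (PiM I (\<lambda>_::nat. Q)) (space (PiM I (\<lambda>_::nat. Q))) = 1"
  using prob_space.prob_space[OF PP_prob] .

context prior
begin

lemma Lam1_meas[measurable]: "(\<lambda>y. Lam pri (Suc k) (z(k:=y))) \<in> borel_measurable borel"
  unfolding Lam_Suc_upd normal_density_def by measurable

lemma ln_Lam1_abs: "\<bar>ln (Lam pri (Suc k) (z(k:=y)))\<bar> \<le>
   (\<bar>ln (beta (Suc k))\<bar> + \<bar>ln Z\<bar> + (\<Sum>i<k. \<bar>ln (normal_density 0 1 (z i))\<bar>)) + \<bar>ln (normal_density 0 1 y)\<bar>"
proof -
  have "(\<Sum>i<Suc k. \<bar>ln (normal_density 0 1 ((z(k:=y)) i))\<bar>) = (\<Sum>i<k. \<bar>ln (normal_density 0 1 (z i))\<bar>) + \<bar>ln (normal_density 0 1 y)\<bar>"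
  proof -
    have "(\<Sum>i<k. \<bar>ln (normal_density 0 1 ((z(k:=y)) i))\<bar>) = (\<Sum>i<k. \<bar>ln (normal_density 0 1 (z i))\<bar>)"
      by (rule sum.cong) auto
    then show ?thesis by simp
  qed
  then show ?thesis using ln_Lam_abs[of "Suc k" "z(k:=y)"] by simp
qed

lemma ln_Lam1_int: "integrable Q (\<lambda>y. ln (Lam pri (Suc k) (z(k:=y))))"
proof (rule Bochner_Integration.integrable_bound)
  show "integrable Q (\<lambda>y. (\<bar>ln (beta (Suc k))\<bar> + \<bar>ln Z\<bar> + (\<Sum>i<k. \<bar>ln (normal_density 0 1 (z i))\<bar>)) + \<bar>ln (normal_density 0 1 y)\<bar>)"
    by (intro Bochner_Integration.integrable_add Qp.integrable_const ell_int)
  show "(\<lambda>y. ln (Lam pri (Suc k) (z(k:=y)))) \<in> borel_measurable Q" by measurable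
  show "AE y in Q. norm (ln (Lam pri (Suc k) (z(k:=y)))) \<le>
     norm ((\<bar>ln (beta (Suc k))\<bar> + \<bar>ln Z\<bar> + (\<Sum>i<k. \<bar>ln (normal_density 0 1 (z i))\<bar>)) + \<bar>ln (normal_density 0 1 y)\<bar>)"
    by (intro AE_I2) (use ln_Lam1_abs[of k z] in \<open>auto intro: order_trans[OF _ abs_ge_self]\<close>)
qed

lemma KL_formula:
  "KL_div (normal_density 0 1) (pred_dens pri k z) =
     Hq - (\<integral>y. ln (Lam pri (Suc k) (z(k:=y))) \<partial>Q) + ln (Lam pri k z)"
proof -
  define L1 where "L1 = (\<lambda>y. Lam pri (Suc k) (z(k:=y)))"
  define L0 where "L0 = Lam pri k z"
  have L1p: "L1 y > 0" for y unfolding L1_def by (rule Lam_pos)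
  have L0p: "L0 > 0" unfolding L0_def by (rule Lam_pos)
  have pt: "normal_density 0 1 y * ln (normal_density 0 1 y / pred_dens pri k z y) =
        normal_density 0 1 y * (ln (normal_density 0 1 y) - ln (L1 y) + ln L0)" for y
  proof -
    have "pred_dens pri k z y = L1 y / L0" unfolding pred_eq L1_def L0_def ..
    moreover have "ln (normal_density 0 1 y / (L1 y / L0)) = ln (normal_density 0 1 y) - ln (L1 y) + ln L0"
      using L1p[of y] L0p normal_density_pos[of 1 0 y] by (simp add: ln_div ln_mult)
    ultimately show ?thesis by simp
  qed
  have m: "(\<lambda>y. ln (normal_density 0 1 y) - ln (L1 y) + ln L0) \<in> borel_measurable borel"
    unfolding L1_def by measurable
  have "KL_div (normal_density 0 1) (pred_dens pri k z) =
        (\<integral>y. normal_density 0 1 y * (ln (normal_density 0 1 y) - ln (L1 y) + ln L0) \<partial>lborel)"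
    unfolding KL_div_def pt ..
  also have "\<dots> = (\<integral>y. ln (normal_density 0 1 y) - ln (L1 y) + ln L0 \<partial>Q)"
    by (rule integral_Q[OF m, symmetric])
  also have "\<dots> = (\<integral>y. ln (normal_density 0 1 y) - ln (L1 y) \<partial>Q) + (\<integral>y. ln L0 \<partial>Q)"
    by (intro Bochner_Integration.integral_add Bochner_Integration.integrable_diff ell_int Qp.integrable_const)
       (unfold L1_def, rule ln_Lam1_int)
  also have "(\<integral>y. ln (normal_density 0 1 y) - ln (L1 y) \<partial>Q) = Hq - (\<integral>y. ln (L1 y) \<partial>Q)"
    unfolding Hq_def by (intro Bochner_Integration.integral_diff ell_int) (unfold L1_def, rule ln_Lam1_int)
  finally show ?thesis unfolding L1_def L0_def Q_const_int .
qed

definition "Iint k = (\<integral>z. ln (Lam pri k z) \<partial>PiM {..<k} (\<lambda>_::nat. Q))"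

lemma B_int: "integrable (PiM {..<k} (\<lambda>_::nat. Q)) (\<lambda>z. \<integral>y. ln (Lam pri (Suc k) (z(k:=y))) \<partial>Q)"
proof (rule Bochner_Integration.integrable_bound)
  let ?C = "\<bar>ln (beta (Suc k))\<bar> + \<bar>ln Z\<bar> + (\<integral>y. \<bar>ln (normal_density 0 1 y)\<bar> \<partial>Q)"
  show "integrable (PiM {..<k} (\<lambda>_::nat. Q)) (\<lambda>z. ?C + (\<Sum>i<k. \<bar>ln (normal_density 0 1 (z i))\<bar>))"
    by (intro Bochner_Integration.integrable_add PP_const sum_ell_int)
  have jm: "(\<lambda>(z, y). ln (Lam pri (Suc k) (z(k:=y)))) \<in> borel_measurable (PiM {..<k} (\<lambda>_::nat. Q) \<Otimes>\<^sub>M Q)"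
  proof -
    have "(\<lambda>(f, y). f(k := y)) \<in> measurable (PiM {..<k} (\<lambda>_::nat. Q) \<Otimes>\<^sub>M Q) (PiM (insert k {..<k}) (\<lambda>_::nat. Q))"
      by (rule measurable_add_dim)
    then have "(\<lambda>(f, y). f(k := y)) \<in> measurable (PiM {..<k} (\<lambda>_::nat. Q) \<Otimes>\<^sub>M Q) (PiM {..<Suc k} (\<lambda>_::nat. Q))"
      by (simp add: lessThan_Suc)
    from measurable_compose[OF this Lam_meas[of "Suc k"]]
    have "(\<lambda>x. Lam pri (Suc k) (case x of (f, y) \<Rightarrow> f(k := y))) \<in> borel_measurable (PiM {..<k} (\<lambda>_::nat. Q) \<Otimes>\<^sub>M Q)" .
    then have "(\<lambda>x. ln (Lam pri (Suc k) (case x of (f, y) \<Rightarrow> f(k := y)))) \<in> borel_measurable (PiM {..<k} (\<lambda>_::nat. Q) \<Otimes>\<^sub>M Q)"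
      by measurable
    then show ?thesis by (simp add: case_prod_beta')
  qed
  show "(\<lambda>z. \<integral>y. ln (Lam pri (Suc k) (z(k:=y))) \<partial>Q) \<in> borel_measurable (PiM {..<k} (\<lambda>_::nat. Q))"
    using Qp.borel_measurable_lebesgue_integral[OF jm] .
  show "AE z in PiM {..<k} (\<lambda>_::nat. Q). norm (\<integral>y. ln (Lam pri (Suc k) (z(k:=y))) \<partial>Q) \<le> norm (?C + (\<Sum>i<k. \<bar>ln (normal_density 0 1 (z i))\<bar>))"
  proof (intro AE_I2)
    fix z :: "nat \<Rightarrow> real"
    have "norm (\<integral>y. ln (Lam pri (Suc k) (z(k:=y))) \<partial>Q) \<le> (\<integral>y. \<bar>ln (Lam pri (Suc k) (z(k:=y)))\<bar> \<partial>Q)"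
      by simp
    also have "\<dots> \<le> (\<integral>y. (\<bar>ln (beta (Suc k))\<bar> + \<bar>ln Z\<bar> + (\<Sum>i<k. \<bar>ln (normal_density 0 1 (z i))\<bar>)) + \<bar>ln (normal_density 0 1 y)\<bar> \<partial>Q)"
      by (intro integral_mono ln_Lam1_abs Bochner_Integration.integrable_add Qp.integrable_const ell_int
          Bochner_Integration.integrable_abs ln_Lam1_int)
    also have "\<dots> = (\<bar>ln (beta (Suc k))\<bar> + \<bar>ln Z\<bar> + (\<Sum>i<k. \<bar>ln (normal_density 0 1 (z i))\<bar>)) + (\<integral>y. \<bar>ln (normal_density 0 1 y)\<bar> \<partial>Q)"
      by (subst Bochner_Integration.integral_add) (auto intro: ell_int simp: Q_const_int)
    also have "\<dots> \<le> norm (?C + (\<Sum>i<k. \<bar>ln (normal_density 0 1 (z i))\<bar>))"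
      by simp
    finally show "norm (\<integral>y. ln (Lam pri (Suc k) (z(k:=y))) \<partial>Q) \<le> norm (?C + (\<Sum>i<k. \<bar>ln (normal_density 0 1 (z i))\<bar>))" .
  qed
qed

lemma E_step:
  "(\<integral>z. KL_div (normal_density 0 1) (pred_dens pri k z) \<partial>PiM {..<k} (\<lambda>_::nat. Q)) = Hq - Iint (Suc k) + Iint k"
proof -
  let ?P = "PiM {..<k} (\<lambda>_::nat. Q)"
  let ?B = "\<lambda>z. \<integral>y. ln (Lam pri (Suc k) (z(k:=y))) \<partial>Q"
  have "(\<integral>z. KL_div (normal_density 0 1) (pred_dens pri k z) \<partial>?P) = (\<integral>z. (Hq - ?B z) + ln (Lam pri k z) \<partial>?P)"
    unfolding KL_formula ..
  also have "\<dots> = (\<integral>z. Hq - ?B z \<partial>?P) + Iint k"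
    unfolding Iint_def by (intro Bochner_Integration.integral_add Bochner_Integration.integrable_diff PP_const B_int lnLam_int)
  also have "(\<integral>z. Hq - ?B z \<partial>?P) = Hq - (\<integral>z. ?B z \<partial>?P)"
    by (subst Bochner_Integration.integral_diff) (auto intro!: PP_const B_int simp: PP_const_int)
  also have "(\<integral>z. ?B z \<partial>?P) = Iint (Suc k)"
  proof -
    have "Iint (Suc k) = (\<integral>z. ln (Lam pri (Suc k) z) \<partial>PiM (insert k {..<k}) (\<lambda>_::nat. Q))"
      unfolding Iint_def by (simp add: lessThan_Suc)
    also have "\<dots> = (\<integral>z. ?B z \<partial>?P)"
      by (rule PQ.product_integral_insert) (use lnLam_int[of "Suc k"] in \<open>auto simp: lessThan_Suc\<close>)
    finally show ?thesis ..
  qed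
  finally show ?thesis .
qed

lemma sum_E:
  "(\<Sum>k<n. (\<integral>z. KL_div (normal_density 0 1) (pred_dens pri k z) \<partial>PiM {..<k} (\<lambda>_::nat. Q))) \<le> ln Z - ln (beta n)"
proof -
  have "(\<Sum>k<n. (\<integral>z. KL_div (normal_density 0 1) (pred_dens pri k z) \<partial>PiM {..<k} (\<lambda>_::nat. Q))) =
        (\<Sum>k<n. Hq - (Iint (Suc k) - Iint k))"
    unfolding E_step by (simp add: algebra_simps)
  also have "\<dots> = real n * Hq - (Iint n - Iint 0)"
    by (simp only: sum_subtractf[of "\<lambda>_. Hq" "\<lambda>k. Iint (Suc k) - Iint k"] sum_lessThan_telescope) simp
  also have "Iint 0 = ln Z"
    unfolding Iint_def Lam0 by (simp add: PP_const_int)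
  also have "ln (beta n) + real n * Hq \<le> Iint n"
  proof -
    have "(\<integral>z. ln (beta n) + (\<Sum>i<n. ln (normal_density 0 1 (z i))) \<partial>PiM {..<n} (\<lambda>_::nat. Q)) \<le> Iint n"
      unfolding Iint_def
      by (intro integral_mono ln_Lam_lower lnLam_int Bochner_Integration.integrable_add PP_const sum_lnf0_int(1))
    moreover have "(\<integral>z. ln (beta n) + (\<Sum>i<n. ln (normal_density 0 1 (z i))) \<partial>PiM {..<n} (\<lambda>_::nat. Q)) = ln (beta n) + real n * Hq"
      by (subst Bochner_Integration.integral_add) (auto intro: PP_const sum_lnf0_int(1) simp: PP_const_int sum_lnf0_int(2))
    ultimately show ?thesis by simp
  qed
  then have "real n * Hq - (Iint n - ln Z) \<le> ln Z - ln (beta n)" by simp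
  finally show ?thesis .
qed

end



lemma ln_bound_aux:
  assumes a: "a > 0" and c: "c > 0" and n: "n \<ge> (1::nat)"
  shows "ln ((ln (2 * (real n + 1)))\<^sup>2 + c\<^sup>2) \<le> a * ln (real n) + (a * (ln 4 + c) + 2 * ln (2 / a))"
proof -
  define L where "L = ln (2 * (real n + 1))"
  have n1: "real n \<ge> 1" using n by simp
  have L0: "L \<ge> 0" unfolding L_def using n1 by simp
  have "2 * (real n + 1) \<le> 4 * real n" using n1 by simp
  then have "L \<le> ln (4 * real n)" unfolding L_def using n1 by simp
  also have "\<dots> = ln 4 + ln (real n)" using n1 by (simp add: ln_mult)
  finally have L1: "L \<le> ln 4 + ln (real n)" .
  have p: "L\<^sup>2 + c\<^sup>2 > 0" using c by (simp add: add_nonneg_pos)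
  have "L\<^sup>2 + c\<^sup>2 \<le> (L + c)\<^sup>2" using L0 c by (simp add: power2_sum)
  moreover have q: "(L + c)\<^sup>2 > 0" using L0 c by simp
  ultimately have "ln (L\<^sup>2 + c\<^sup>2) \<le> ln ((L + c)\<^sup>2)" using p by simp
  also have "\<dots> = 2 * ln (L + c)" using L0 c by (simp add: ln_realpow)
  also have "ln (L + c) \<le> (L + c) * (a / 2) + ln (2 / a) - 1"
  proof -
    have "ln ((L + c) * (a / 2)) \<le> (L + c) * (a / 2) - 1"
      using L0 c a by (intro ln_le_minus_one) simp
    moreover have "ln ((L + c) * (a / 2)) = ln (L + c) + ln (a / 2)"
      by (rule ln_mult_pos) (use L0 c a in auto)
    moreover have "ln (a / 2) = - ln (2 / a)" using a by (simp add: ln_div)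
    ultimately show ?thesis by simp
  qed
  finally have f1: "ln (L\<^sup>2 + c\<^sup>2) \<le> 2 * ((L + c) * (a / 2) + ln (2 / a) - 1)" by simp
  have eq: "2 * ((L + c) * (a / 2) + ln (2 / a) - 1) = a * (L + c) + 2 * ln (2 / a) - 2"
    by (simp add: field_simps)
  have "ln (L\<^sup>2 + c\<^sup>2) \<le> a * (L + c) + 2 * ln (2 / a) - 2" using f1 unfolding eq .
  also have "\<dots> \<le> a * (ln 4 + ln (real n) + c) + 2 * ln (2 / a)"
  proof -
    have "a * (L + c) \<le> a * (ln 4 + ln (real n) + c)" using L1 a by (intro mult_left_mono) auto
    then show ?thesis by linarith
  qed
  finally show ?thesis unfolding L_def by (simp add: algebra_simps)
qed

lemma lin_aux:
  fixes X A T Kt Z' K' B :: real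
  shows "X \<le> A + T \<Longrightarrow> Kt = Z' - K' + T \<Longrightarrow> Kt \<le> \<bar>Kt\<bar> \<Longrightarrow> B = \<bar>Kt\<bar> + 1 \<Longrightarrow> Z' - (K' - X) \<le> A + (1 + B)"
  by linarith

definition bfun :: "real \<Rightarrow> real \<Rightarrow> real" where
  "bfun c G = (c / pi) / (2 * ((ln (2*G))\<^sup>2 + c\<^sup>2)) * (sqrt G / sqrt (2*pi)) * exp (-1)"

lemma prior_inst: "c > 0 \<Longrightarrow> prior (scale_mix_prior (dgc c)) (bfun c)"
proof (unfold_locales)
  assume c: "c > 0"
  show "scale_mix_prior (dgc c) \<in> borel_measurable borel" by (rule pri_meas)
  show "\<And>phi. 0 \<le> scale_mix_prior (dgc c) phi" by (rule pri_nonneg[OF c])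
  show "\<And>phi. scale_mix_prior (dgc c) (- phi) = scale_mix_prior (dgc c) phi" by (rule pri_even)
  show "integrable lborel (scale_mix_prior (dgc c))" by (rule pri_integrable[OF c])
  show "\<And>G phi. 1 \<le> G \<Longrightarrow> phi \<noteq> 0 \<Longrightarrow> phi\<^sup>2 \<le> 1 / G \<Longrightarrow> bfun c G \<le> scale_mix_prior (dgc c) phi"
    unfolding bfun_def by (rule pri_lower[OF c])
  show "\<And>G. 1 \<le> G \<Longrightarrow> 0 < bfun c G"
    unfolding bfun_def using c by (auto intro!: mult_pos_pos divide_pos_pos add_nonneg_pos)
qed

lemma sum_shift1:
  fixes n :: nat and g :: "nat \<Rightarrow> 'a::comm_monoid_add"
  shows "(\<Sum>j\<in>{1..n}. g (j - 1)) = (\<Sum>k<n. g k)"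
  by (induct n) (auto simp: sum.cl_ivl_Suc lessThan_Suc add.commute)

lemma main_c:
  assumes c: "c > 0" and a: "a > 0"
  shows "\<exists>C > 0. \<forall>n::nat. n \<ge> 1 \<longrightarrow>
           cesaro_risk (scale_mix_prior (dgc c)) 0 n \<le> a * ln (real n) / real n + (1 / real n) * (1 + 1 / (a * C))"
proof -
  interpret prior "scale_mix_prior (dgc c)" "bfun c" by (rule prior_inst[OF c])
  define K where "K = (c / pi) / 2 / sqrt (2*pi) * exp (-1) * exp (- 1 / 2)"
  have K0: "K > 0" unfolding K_def using c by simp
  have beta_eq: "beta n = K / ((ln (2 * (real n + 1)))\<^sup>2 + c\<^sup>2)" for n
  proof -
    define D where "D = (ln (2 * (real n + 1)))\<^sup>2 + c\<^sup>2"
    define s where "s = sqrt (real n + 1)"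
    have D: "D > 0" unfolding D_def using c by (simp add: add_nonneg_pos)
    have s: "s > 0" unfolding s_def by simp
    have "beta n = (c / pi) / (2 * D) * (s / sqrt (2*pi)) * exp (-1) * (1 / s) * exp (- 1 / 2)"
      unfolding beta_def bfun_def D_def s_def by simp
    also have "\<dots> = K / D" unfolding K_def using D s by (simp add: field_simps)
    finally show ?thesis unfolding D_def .
  qed
  define Kt where "Kt = ln Z - ln K + (a * (ln 4 + c) + 2 * ln (2 / a))"
  define C where "C = 1 / (a * (\<bar>Kt\<bar> + 1))"
  have C0: "C > 0" unfolding C_def using a by (simp add: add_nonneg_pos)
  have aC: "1 / (a * C) = \<bar>Kt\<bar> + 1" unfolding C_def using a by (simp add: field_simps add_nonneg_pos)
  show ?thesis
  proof (intro exI[of _ C] conjI allI impI C0)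
    fix n :: nat assume n: "n \<ge> 1"
    have rn: "real n > 0" using n by simp
    have mono: "\<And>x y. x \<le> y \<Longrightarrow> 1 / real n * x \<le> 1 / real n * y" using rn by (simp add: divide_right_mono)
    have "cesaro_risk (scale_mix_prior (dgc c)) 0 n =
          (1 / real n) * (\<Sum>k<n. (\<integral>z. KL_div (normal_density 0 1) (pred_dens (scale_mix_prior (dgc c)) k z) \<partial>PiM {..<k} (\<lambda>_::nat. Q)))"
      unfolding cesaro_risk_def Q_def by (subst sum_shift1[where g="\<lambda>k. \<integral>z. KL_div (normal_density 0 1) (pred_dens (scale_mix_prior (dgc c)) k z) \<partial>PiM {..<k} (\<lambda>_::nat. density lborel (normal_density 0 1))", symmetric]) simp
    also have "\<dots> \<le> (1 / real n) * (ln Z - ln (beta n))"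
      using sum_E[of n] rn by (intro mult_left_mono) auto
    also have "ln (beta n) = ln K - ln ((ln (2 * (real n + 1)))\<^sup>2 + c\<^sup>2)"
      unfolding beta_eq using K0 c by (simp add: ln_div add_nonneg_pos)
    also have "ln Z - (ln K - ln ((ln (2 * (real n + 1)))\<^sup>2 + c\<^sup>2)) \<le> a * ln (real n) + (1 + 1 / (a * C))"
      by (rule lin_aux[OF ln_bound_aux[OF a c n] Kt_def abs_ge_self[of Kt] aC])
    also have "(1 / real n) * (a * ln (real n) + (1 + 1 / (a * C))) = a * ln (real n) / real n + (1 / real n) * (1 + 1 / (a * C))"
      by (simp add: distrib_left)
    finally show "cesaro_risk (scale_mix_prior (dgc c)) 0 n \<le> a * ln (real n) / real n + (1 / real n) * (1 + 1 / (a * C))"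
      using mono by blast
  qed
qed

theorem theorem3:
  fixes pri :: "real \<Rightarrow> real" and a :: real
  assumes "pri = hths_prior \<or> pri = hths_plus_prior"
    and "a > 0"
  shows "\<exists>C > 0. \<forall>n::nat. n \<ge> 1 \<longrightarrow>
           cesaro_risk pri 0 n \<le> a * ln (real n) / real n + (1 / real n) * (1 + 1 / (a * C))"
proof -
  from assms(1) obtain c where c: "c > 0" "pri = scale_mix_prior (dgc c)"
    unfolding hths_prior_def hths_plus_prior_def hths_eq hths_plus_eq
    by (metis pi_gt_zero mult_pos_pos zero_less_numeral)
  show ?thesis unfolding c(2) by (rule main_c[OF c(1) assms(2)])
qed

end
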